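(* Let $k$ be a field of characteristic zero, $V$ a $k$-vector space, $V_z=V\otimes_kk((z))$, and $\varphi\in\mathrm{End}_k(V)$ finite potent. Then the series $$\exp_z(\varphi)=1+z\varphi+\frac{z^2\varphi^2}{2}+\frac{z^3\varphi^3}{3!}+\cdots$$ defines a well-defined element of $\mathrm{Aut}_{k((z))}(V_z)$, and the endomorphism $\bar\varphi=\exp_z(\varphi)-1=z\varphi+\frac{z^2\varphi^2}{2}+\cdots$ of $V_z$ is finite potent.
   Context: An endomorphism $\psi$ of a vector space $U$ is finite potent if $\psi^nU$ is finite dimensional for some $n$. *)

theory Defs
  imports Main "HOL-Computational_Algebra.Formal_Laurent_Series"
begin

text \<open>A k-vector space V is modelled as a type 'v with a scalar multiplication
  scale :: 'k => 'v => 'v satisfying the locale vector_space (V = UNIV).\<close>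

definition fin_dim :: "('k::field \<Rightarrow> 'v::ab_group_add \<Rightarrow> 'v) \<Rightarrow> 'v set \<Rightarrow> bool" where
  "fin_dim scale W \<longleftrightarrow> (\<exists>B. finite B \<and> W \<subseteq> module.span scale B)"

definition finite_potent :: "('k::field \<Rightarrow> 'v::ab_group_add \<Rightarrow> 'v) \<Rightarrow> ('v \<Rightarrow> 'v) \<Rightarrow> bool" where
  "finite_potent scale \<phi> \<longleftrightarrow> (\<exists>n. fin_dim scale (range (\<phi> ^^ n)))"

text \<open>V_z = V \<otimes>_k k((z)), realised concretely as the formal Laurent series
  sum_n x_n z^n with coefficients x_n in V, which vanish for n sufficiently negative and
  whose coefficients all lie in a finite dimensional subspace of V.\<close>
definition Vz :: "('k::field \<Rightarrow> 'v::ab_group_add \<Rightarrow> 'v) \<Rightarrow> (int \<Rightarrow> 'v) set" where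
  "Vz scale = {x. (\<exists>N. \<forall>n<N. x n = 0) \<and> fin_dim scale (range x)}"

definition lsmult :: "('k::field \<Rightarrow> 'v::ab_group_add \<Rightarrow> 'v) \<Rightarrow> 'k fls \<Rightarrow> (int \<Rightarrow> 'v) \<Rightarrow> (int \<Rightarrow> 'v)" where
  "lsmult scale f x = (\<lambda>n. \<Sum>i\<in>{i. fls_nth f i \<noteq> 0 \<and> x (n - i) \<noteq> 0}. scale (fls_nth f i) (x (n - i)))"

definition lspan :: "('k::field \<Rightarrow> 'v::ab_group_add \<Rightarrow> 'v) \<Rightarrow> (int \<Rightarrow> 'v) set \<Rightarrow> (int \<Rightarrow> 'v) set" where
  "lspan scale B = {x. \<exists>c. x = (\<lambda>n. \<Sum>b\<in>B. lsmult scale (c b) b n)}"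

definition Vz_finite_potent :: "('k::field \<Rightarrow> 'v::ab_group_add \<Rightarrow> 'v) \<Rightarrow> ((int \<Rightarrow> 'v) \<Rightarrow> (int \<Rightarrow> 'v)) \<Rightarrow> bool" where
  "Vz_finite_potent scale \<psi> \<longleftrightarrow>
     (\<exists>m B. finite B \<and> B \<subseteq> Vz scale \<and> (\<psi> ^^ m) ` Vz scale \<subseteq> lspan scale B)"

text \<open>exp_z(phi) = sum_i z^i phi^i / i!, acting coefficientwise:
  (exp_z(phi) x)_n = sum_{i>=0} phi^i (x_{n-i}) / i!  (a finite sum on V_z).\<close>
definition expz :: "('k::field_char_0 \<Rightarrow> 'v::ab_group_add \<Rightarrow> 'v) \<Rightarrow> ('v \<Rightarrow> 'v) \<Rightarrow> (int \<Rightarrow> 'v) \<Rightarrow> (int \<Rightarrow> 'v)" where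
  "expz scale \<phi> x = (\<lambda>n. \<Sum>i\<in>{i::nat. x (n - int i) \<noteq> 0}. scale (1 / fact i) ((\<phi> ^^ i) (x (n - int i))))"

end

theory Submission
  imports Defs
begin

lemma coef_alt:
  "(\<Sum>a\<le>k. (-1)^a / (fact a * fact (k - a)) :: 'k::field_char_0) = (if k = 0 then 1 else 0)"
proof -
  have "(\<Sum>a\<le>k. (-1)^a / (fact a * fact (k - a)) :: 'k) = (\<Sum>a\<le>k. (-1)^a * of_nat (k choose a)) / fact k"
    unfolding sum_divide_distrib
  proof (intro sum.cong refl)
    fix a assume "a \<in> {..k}"
    then have "of_nat (k choose a) = (fact k / (fact a * fact (k - a)) :: 'k)"
      by (simp add: binomial_fact)
    then show "(-1)^a / (fact a * fact (k - a)) = (-1)^a * of_nat (k choose a) / (fact k :: 'k)"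
      by simp
  qed
  also have "\<dots> = (if k = 0 then 1 else 0)"
    by (cases "k = 0") (simp_all add: choose_alternating_sum)
  finally show ?thesis .
qed
locale expz_ctx = vector_space scale
  for scale :: "'k::field_char_0 \<Rightarrow> 'v::ab_group_add \<Rightarrow> 'v" +
  fixes \<phi> :: "'v \<Rightarrow> 'v"
  assumes lin: "Vector_Spaces.linear scale scale \<phi>"
begin

lemma pow_lin: "Vector_Spaces.linear scale scale (\<phi>^^i)"
proof (induction i)
  case 0 then show ?case using linear_id by (simp add: id_def)
next
  case (Suc i) then show ?case
    using Vector_Spaces.linear_compose[OF Suc lin] by (simp add: funpow_Suc_right[symmetric] comp_def funpow_swap1)
qed

lemma pw_hom: "module_hom scale scale (\<phi>^^i)"
  using pow_lin by (simp add: module_hom_iff_linear)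

lemma pw0[simp]: "(\<phi>^^i) 0 = 0" using module_hom.zero[OF pw_hom] .
lemma pwadd: "(\<phi>^^i) (a + b) = (\<phi>^^i) a + (\<phi>^^i) b" using module_hom.add[OF pw_hom] .
lemma pwscale: "(\<phi>^^i) (scale c a) = scale c ((\<phi>^^i) a)" using module_hom.scale[OF pw_hom] .
lemma pwsum: "(\<phi>^^i) (sum g S) = (\<Sum>a\<in>S. (\<phi>^^i) (g a))" using module_hom.sum[OF pw_hom] .
lemma pwspan: "span ((\<phi>^^i) ` S) = (\<phi>^^i) ` span S" using module_hom.span_image[OF pw_hom] .

lemma expz_eq:
  assumes "finite T" "{i. x (n - int i) \<noteq> 0} \<subseteq> T"
  shows "expz scale \<phi> x n = (\<Sum>i\<in>T. scale (1 / fact i) ((\<phi> ^^ i) (x (n - int i))))"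
  unfolding expz_def
  by (rule sum.mono_neutral_left) (use assms in auto)

lemma supp_le:
  assumes "\<forall>m<N. x m = 0"
  shows "{i. x (n - int i) \<noteq> 0} \<subseteq> {..nat (n - N)}"
proof
  fix i assume "i \<in> {i. x (n - int i) \<noteq> 0}"
  then have "\<not> (n - int i < N)" using assms by auto
  then show "i \<in> {..nat (n - N)}" by auto
qed

lemma expz_eqN:
  assumes "\<forall>m<N. x m = 0" "nat (n - N) \<le> K"
  shows "expz scale \<phi> x n = (\<Sum>i\<le>K. scale (1 / fact i) ((\<phi> ^^ i) (x (n - int i))))"
  by (rule expz_eq) (use supp_le[OF assms(1), of n] assms(2) in auto)

lemma expz_vanish:
  assumes "\<forall>m<N. x m = 0" "n < N" shows "expz scale \<phi> x n = 0"
  using assms unfolding expz_def by (auto intro!: sum.neutral)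

lemma lsmult_eq:
  assumes "finite T" "{i. fls_nth f i \<noteq> 0 \<and> x (n - i) \<noteq> 0} \<subseteq> T"
  shows "lsmult scale f x n = (\<Sum>i\<in>T. scale (fls_nth f i) (x (n - i)))"
  unfolding lsmult_def
  by (rule sum.mono_neutral_left) (use assms in auto)

lemma VzE:
  assumes "x \<in> Vz scale"
  obtains N E where "\<forall>m<N. x m = 0" "finite E" "range x \<subseteq> span E"
  using assms unfolding Vz_def fin_dim_def by auto

lemma expz_Vz:
  assumes fp: "finite_potent scale \<phi>" and x: "x \<in> Vz scale"
  shows "expz scale \<phi> x \<in> Vz scale"
proof -
  obtain N E where N: "\<forall>m<N. x m = 0" and E: "finite E" "range x \<subseteq> span E"
    using VzE[OF x] by blast
  obtain m F where F: "finite F" "range (\<phi>^^m) \<subseteq> span F"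
    using fp unfolding finite_potent_def fin_dim_def by blast
  define G where "G = F \<union> (\<Union>i<m. (\<phi>^^i) ` E)"
  have G: "finite G" using E F unfolding G_def by auto
  have key: "(\<phi>^^i) v \<in> span G" if "v \<in> span E" for i v
  proof (cases "i < m")
    case True
    have "(\<phi>^^i) v \<in> span ((\<phi>^^i) ` E)" using that pwspan by auto
    also have "\<dots> \<subseteq> span G" by (rule span_mono) (use True in \<open>auto simp: G_def\<close>)
    finally show ?thesis .
  next
    case False
    have "(\<phi>^^i) v = (\<phi>^^m) ((\<phi>^^(i-m)) v)"
      using False by (metis funpow_add le_add_diff_inverse not_less o_apply)
    also have "\<dots> \<in> span F" using F by auto
    also have "\<dots> \<subseteq> span G" by (rule span_mono) (auto simp: G_def)
    finally show ?thesis .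
  qed
  have "range (expz scale \<phi> x) \<subseteq> span G"
  proof clarify
    fix n
    show "expz scale \<phi> x n \<in> span G" unfolding expz_def
      by (intro span_sum span_scale key) (use E in auto)
  qed
  moreover have "\<forall>n<N. expz scale \<phi> x n = 0" using expz_vanish[OF N] by auto
  ultimately show ?thesis unfolding Vz_def fin_dim_def using G by auto
qed

lemma expz_add:
  assumes x: "x \<in> Vz scale" and y: "y \<in> Vz scale"
  shows "expz scale \<phi> (\<lambda>n. x n + y n) = (\<lambda>n. expz scale \<phi> x n + expz scale \<phi> y n)"
proof
  fix n
  obtain N1 where N1: "\<forall>m<N1. x m = 0" using VzE[OF x] by blast
  obtain N2 where N2: "\<forall>m<N2. y m = 0" using VzE[OF y] by blast
  define N where "N = min N1 N2"
  have Nx: "\<forall>m<N. x m = 0" and Ny: "\<forall>m<N. y m = 0" and Nxy: "\<forall>m<N. x m + y m = 0"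
    using N1 N2 by (auto simp: N_def)
  define K where "K = nat (n - N)"
  show "expz scale \<phi> (\<lambda>n. x n + y n) n = expz scale \<phi> x n + expz scale \<phi> y n"
    using expz_eqN[OF Nx, of n K] expz_eqN[OF Ny, of n K] expz_eqN[OF Nxy, of n K]
    by (simp add: K_def pwadd scale_right_distrib sum.distrib)
qed

lemma expz_lsmult:
  assumes x: "x \<in> Vz scale"
  shows "expz scale \<phi> (lsmult scale f x) = lsmult scale f (expz scale \<phi> x)"
proof
  fix n
  obtain N where N: "\<forall>m<N. x m = 0" using VzE[OF x] by blast
  obtain M where M: "\<forall>i<M. fls_nth f i = 0" using fls_nth_vanishes_belowE by blast
  define I where "I = {M..n-N}"
  define J where "J = {..nat (n - (M + N))}"
  have lsv: "\<forall>m<M+N. lsmult scale f x m = 0"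
  proof (intro allI impI)
    fix m assume m: "m < M + N"
    have "{i. fls_nth f i \<noteq> 0 \<and> x (m - i) \<noteq> 0} = {}"
    proof (rule ccontr)
      assume "{i. fls_nth f i \<noteq> 0 \<and> x (m - i) \<noteq> 0} \<noteq> {}"
      then obtain i where "fls_nth f i \<noteq> 0" "x (m - i) \<noteq> 0" by auto
      moreover from this(1) M have "i \<ge> M" by (meson not_less)
      ultimately have "m - i < N" using m by linarith
      with N \<open>x (m - i) \<noteq> 0\<close> show False by auto
    qed
    then show "lsmult scale f x m = 0" unfolding lsmult_def by (simp only: sum.empty)
  qed
  have L1: "expz scale \<phi> (lsmult scale f x) n =
     (\<Sum>j\<in>J. scale (1 / fact j) ((\<phi>^^j) (lsmult scale f x (n - int j))))"
    unfolding J_def by (rule expz_eqN[OF lsv]) simp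
  have L2: "lsmult scale f x (n - int j) = (\<Sum>i\<in>I. scale (fls_nth f i) (x (n - int j - i)))" for j
  proof (rule lsmult_eq)
    show "finite I" by (simp add: I_def)
    show "{i. fls_nth f i \<noteq> 0 \<and> x (n - int j - i) \<noteq> 0} \<subseteq> I"
    proof clarify
      fix i assume "fls_nth f i \<noteq> 0" "x (n - int j - i) \<noteq> 0"
      then have "\<not> i < M" "\<not> n - int j - i < N" using M N by auto
      then show "i \<in> I" by (auto simp: I_def)
    qed
  qed
  have exv: "\<forall>m<N. expz scale \<phi> x m = 0" using expz_vanish[OF N] by auto
  have R1: "lsmult scale f (expz scale \<phi> x) n = (\<Sum>i\<in>I. scale (fls_nth f i) (expz scale \<phi> x (n - i)))"
  proof (rule lsmult_eq)
    show "finite I" by (simp add: I_def)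
    show "{i. fls_nth f i \<noteq> 0 \<and> expz scale \<phi> x (n - i) \<noteq> 0} \<subseteq> I"
    proof clarify
      fix i assume "fls_nth f i \<noteq> 0" "expz scale \<phi> x (n - i) \<noteq> 0"
      then have "\<not> i < M" "\<not> n - i < N" using M exv by auto
      then show "i \<in> I" by (auto simp: I_def)
    qed
  qed
  have R2: "expz scale \<phi> x (n - i) = (\<Sum>j\<in>J. scale (1 / fact j) ((\<phi>^^j) (x (n - i - int j))))"
    if "i \<in> I" for i
    unfolding J_def by (rule expz_eqN[OF N]) (use that in \<open>auto simp: I_def\<close>)
  have "expz scale \<phi> (lsmult scale f x) n =
      (\<Sum>j\<in>J. \<Sum>i\<in>I. scale (1 / fact j) (scale (fls_nth f i) ((\<phi>^^j) (x (n - int j - i)))))"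
    unfolding L1 L2 by (simp add: pwsum pwscale scale_sum_right)
  also have "\<dots> = (\<Sum>i\<in>I. \<Sum>j\<in>J. scale (fls_nth f i) (scale (1 / fact j) ((\<phi>^^j) (x (n - i - int j)))))"
  proof (subst sum.swap, intro sum.cong refl)
    fix i j
    have e: "n - int j - i = n - i - int j" by simp
    show "scale (1 / fact j) (scale (fls_nth f i) ((\<phi>^^j) (x (n - int j - i)))) =
          scale (fls_nth f i) (scale (1 / fact j) ((\<phi>^^j) (x (n - i - int j))))"
      unfolding e by (simp add: mult.commute)
  qed
  also have "\<dots> = lsmult scale f (expz scale \<phi> x) n"
    unfolding R1 by (intro sum.cong refl) (simp add: R2 scale_sum_right)
  finally show "expz scale \<phi> (lsmult scale f x) n = lsmult scale f (expz scale \<phi> x) n" .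
qed

lemma hom1: "module_hom scale scale \<phi>" using lin by (simp add: module_hom_iff_linear)

lemma neg_lin: "Vector_Spaces.linear scale scale (\<lambda>v. - \<phi> v)"
  unfolding Vector_Spaces.linear_iff
  using vector_space_axioms module_hom.add[OF hom1] module_hom.scale[OF hom1]
  by auto

lemma neg_pow: "((\<lambda>v. - \<phi> v)^^a) v = scale ((-1)^a) ((\<phi>^^a) v)"
proof (induction a)
  case 0 then show ?case by simp
next
  case (Suc a)
  have "((\<lambda>v. - \<phi> v)^^Suc a) v = - \<phi> (((\<lambda>v. - \<phi> v)^^a) v)" by simp
  also have "\<dots> = - scale ((-1)^a) (\<phi> ((\<phi>^^a) v))" unfolding Suc module_hom.scale[OF hom1] ..
  also have "\<dots> = scale ((-1)^Suc a) ((\<phi>^^Suc a) v)" by simp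
  finally show ?case .
qed

lemma expz_neg_comp:
  assumes N: "\<forall>m<N. x m = 0"
  shows "expz scale (\<lambda>v. - \<phi> v) (expz scale \<phi> x) = x"
proof
  fix n
  interpret neg: expz_ctx scale "\<lambda>v. - \<phi> v"
    unfolding expz_ctx_def expz_ctx_axioms_def using vector_space_axioms neg_lin by blast
  define K where "K = nat (n - N)"
  define g where "g a b = scale ((-1)^a / (fact a * fact b)) ((\<phi>^^(a+b)) (x (n - int (a+b))))" for a b
  have exv: "\<forall>m<N. expz scale \<phi> x m = 0" using expz_vanish[OF N] by auto
  have "expz scale (\<lambda>v. - \<phi> v) (expz scale \<phi> x) n =
     (\<Sum>a\<le>K. scale (1 / fact a) (((\<lambda>v. - \<phi> v)^^a) (expz scale \<phi> x (n - int a))))"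
    unfolding K_def by (rule neg.expz_eqN[OF exv]) simp
  also have "\<dots> = (\<Sum>a\<le>K. \<Sum>b\<le>K. g a b)"
  proof (intro sum.cong refl)
    fix a assume a: "a \<in> {..K}"
    have "expz scale \<phi> x (n - int a) = (\<Sum>b\<le>K. scale (1 / fact b) ((\<phi>^^b) (x (n - int a - int b))))"
      by (rule expz_eqN[OF N]) (simp add: K_def)
    then show "scale (1 / fact a) (((\<lambda>v. - \<phi> v)^^a) (expz scale \<phi> x (n - int a))) = (\<Sum>b\<le>K. g a b)"
      by (simp add: neg_pow pwsum pwscale scale_sum_right g_def funpow_add diff_diff_eq mult.commute)
  qed
  also have "\<dots> = (\<Sum>(a,b)\<in>{..K}\<times>{..K}. g a b)"
    by (simp add: sum.cartesian_product)
  also have "\<dots> = (\<Sum>(a,b)\<in>{(a,b). a + b \<le> K}. g a b)"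
  proof (rule sum.mono_neutral_right)
    show "finite ({..K}\<times>{..K})" by simp
    show "{(a,b). a + b \<le> K} \<subseteq> {..K}\<times>{..K}" by auto
    show "\<forall>i\<in>{..K} \<times> {..K} - {(a, b). a + b \<le> K}. (case i of (a, b) \<Rightarrow> g a b) = 0"
    proof (intro ballI)
      fix p assume p: "p \<in> {..K}\<times>{..K} - {(a,b). a+b \<le> K}"
      obtain a b where ab: "p = (a,b)" by (cases p)
      with p have "\<not> a+b \<le> K" by auto
      then have "n - int(a+b) < N" by (simp add: K_def)
      then have "x (n - int(a+b)) = 0" using N by blast
      then show "(case p of (a,b) \<Rightarrow> g a b) = 0" by (simp add: ab g_def)
    qed
  qed
  also have "\<dots> = (\<Sum>k\<le>K. \<Sum>a\<le>k. g a (k - a))"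
    by (rule sum.triangle_reindex_eq)
  also have "\<dots> = (\<Sum>k\<le>K. scale (if k = 0 then 1 else 0) ((\<phi>^^k) (x (n - int k))))"
  proof (intro sum.cong refl)
    fix k
    have "(\<Sum>a\<le>k. g a (k - a)) = (\<Sum>a\<le>k. scale ((-1)^a / (fact a * fact (k - a))) ((\<phi>^^k) (x (n - int k))))"
      by (intro sum.cong refl) (simp add: g_def)
    also have "\<dots> = scale (\<Sum>a\<le>k. (-1)^a / (fact a * fact (k - a))) ((\<phi>^^k) (x (n - int k)))"
      by (simp add: scale_sum_left)
    finally show "(\<Sum>a\<le>k. g a (k - a)) = scale (if k = 0 then 1 else 0) ((\<phi>^^k) (x (n - int k)))"
      by (simp add: coef_alt)
  qed
  also have "\<dots> = (\<Sum>k\<le>K. if k = 0 then x n else 0)"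
    by (intro sum.cong refl) simp
  also have "\<dots> = x n"
    by simp
  finally show "expz scale (\<lambda>v. - \<phi> v) (expz scale \<phi> x) n = x n" .
qed

end

context expz_ctx begin

lemma Vz_diff:
  assumes x: "x \<in> Vz scale" and y: "y \<in> Vz scale"
  shows "(\<lambda>n. x n - y n) \<in> Vz scale"
proof -
  obtain N1 E1 where 1: "\<forall>m<N1. x m = 0" "finite E1" "range x \<subseteq> span E1" using VzE[OF x] by blast
  obtain N2 E2 where 2: "\<forall>m<N2. y m = 0" "finite E2" "range y \<subseteq> span E2" using VzE[OF y] by blast
  have "\<forall>m<min N1 N2. x m - y m = 0" using 1 2 by auto
  moreover have "range (\<lambda>n. x n - y n) \<subseteq> span (E1 \<union> E2)"
  proof clarify
    fix n
    have "x n \<in> span (E1 \<union> E2)" using 1 span_mono[of E1 "E1 \<union> E2"] by auto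
    moreover have "y n \<in> span (E1 \<union> E2)" using 2 span_mono[of E2 "E1 \<union> E2"] by auto
    ultimately show "x n - y n \<in> span (E1 \<union> E2)" by (rule span_diff)
  qed
  ultimately show ?thesis unfolding Vz_def fin_dim_def using 1 2 by blast
qed

lemma R_span: "span (range (\<phi>^^j)) = range (\<phi>^^j)"
  using pwspan[of j UNIV] by simp

lemma bar_step:
  assumes x: "x \<in> Vz scale" and R: "\<forall>n. x n \<in> range (\<phi>^^m)"
  shows "expz scale \<phi> x n - x n \<in> range (\<phi>^^Suc m)"
proof -
  obtain N where N: "\<forall>m<N. x m = 0" using VzE[OF x] by blast
  define K where "K = nat (n - N)"
  have "expz scale \<phi> x n = (\<Sum>i\<le>Suc K. scale (1 / fact i) ((\<phi> ^^ i) (x (n - int i))))"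
    by (rule expz_eqN[OF N]) (simp add: K_def)
  also have "\<dots> = x n + (\<Sum>i\<le>K. scale (1 / fact (Suc i)) ((\<phi> ^^ Suc i) (x (n - int (Suc i)))))"
    by (subst sum.atMost_Suc_shift) simp
  finally have e: "expz scale \<phi> x n - x n = (\<Sum>i\<le>K. scale (1 / fact (Suc i)) ((\<phi> ^^ Suc i) (x (n - int (Suc i)))))"
    by simp
  have "(\<Sum>i\<le>K. scale (1 / fact (Suc i)) ((\<phi> ^^ Suc i) (x (n - int (Suc i))))) \<in> span (range (\<phi>^^Suc m))"
  proof (intro span_sum span_scale)
    fix i
    obtain w where w: "x (n - int (Suc i)) = (\<phi>^^m) w" using R by blast
    have "(\<phi> ^^ Suc i) ((\<phi>^^m) w) = (\<phi>^^Suc m) ((\<phi>^^i) w)"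
      by (metis funpow_add o_apply add.commute add_Suc_right add_Suc)
    then have "(\<phi> ^^ Suc i) (x (n - int (Suc i))) = (\<phi>^^Suc m) ((\<phi>^^i) w)"
      unfolding w .
    then show "(\<phi> ^^ Suc i) (x (n - int (Suc i))) \<in> span (range (\<phi>^^Suc m))"
      using span_superset[of "range (\<phi>^^Suc m)"] by (metis rangeI subsetD)
  qed
  then show ?thesis by (subst e, subst R_span[symmetric]) assumption
qed

lemma bar_pow:
  assumes x: "x \<in> Vz scale" and fp: "finite_potent scale \<phi>"
  shows "((\<lambda>x n. expz scale \<phi> x n - x n)^^m) x \<in> Vz scale \<and>
         (\<forall>n. ((\<lambda>x n. expz scale \<phi> x n - x n)^^m) x n \<in> range (\<phi>^^m))"
proof (induction m)
  case 0 then show ?case using x by simp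
next
  case (Suc m)
  then show ?case using bar_step[of _ m] Vz_diff expz_Vz[OF fp] by simp
qed

definition delta :: "'v \<Rightarrow> int \<Rightarrow> 'v" where "delta e = (\<lambda>n. if n = 0 then e else 0)"

lemma lsmult_delta: "lsmult scale f (delta e) n = scale (fls_nth f n) e"
proof -
  have "lsmult scale f (delta e) n = (\<Sum>i\<in>{n}. scale (fls_nth f i) (delta e (n - i)))"
    by (rule lsmult_eq) (auto simp: delta_def)
  then show ?thesis by (simp add: delta_def)
qed

lemma delta_Vz: "delta e \<in> Vz scale"
proof -
  have "\<forall>m<0. delta e m = 0" by (simp add: delta_def)
  moreover have "range (delta e) \<subseteq> span {e}"
    by (auto simp: delta_def span_zero span_base)
  ultimately show ?thesis unfolding Vz_def fin_dim_def by blast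
qed

lemma in_lspan:
  assumes y: "y \<in> Vz scale" and F: "finite F" and yF: "\<forall>n. y n \<in> span F"
  shows "y \<in> lspan scale (delta ` F)"
proof -
  obtain N where N: "\<forall>m<N. y m = 0" using VzE[OF y] by blast
  define u where "u n = (if y n = 0 then (\<lambda>_. 0) else (SOME u. y n = (\<Sum>v\<in>F. scale (u v) v)))" for n
  have u: "y n = (\<Sum>v\<in>F. scale (u n v) v)" for n
  proof (cases "y n = 0")
    case True then show ?thesis by (simp add: u_def)
  next
    case False
    have ex: "\<exists>u. y n = (\<Sum>v\<in>F. scale (u v) v)" using yF span_finite[OF F] by blast
    show ?thesis using False someI_ex[OF ex] unfolding u_def by simp
  qed
  have u0: "\<forall>n<N. u n e = 0" for e using N by (simp add: u_def)
  define c :: "(int \<Rightarrow> 'v) \<Rightarrow> 'k fls" where "c b = Abs_fls (\<lambda>n. u n (b 0))" for b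
  have cn: "fls_nth (c (delta e)) n = u n e" for e n
    unfolding c_def using nth_Abs_fls_lower_bound[of N "\<lambda>n. u n (delta e 0)"] u0
    by (simp add: delta_def)
  have inj: "inj_on delta F" by (rule inj_onI) (metis delta_def)
  have "y = (\<lambda>n. \<Sum>b\<in>delta ` F. lsmult scale (c b) b n)"
  proof
    fix n
    show "y n = (\<Sum>b\<in>delta ` F. lsmult scale (c b) b n)"
      by (simp add: sum.reindex[OF inj] lsmult_delta cn u[of n])
  qed
  then show ?thesis unfolding lspan_def by blast
qed

lemma bar_fp:
  assumes fp: "finite_potent scale \<phi>"
  shows "Vz_finite_potent scale (\<lambda>x n. expz scale \<phi> x n - x n)"
proof -
  obtain m F where F: "finite F" "range (\<phi>^^m) \<subseteq> span F"
    using fp unfolding finite_potent_def fin_dim_def by blast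
  have "((\<lambda>x n. expz scale \<phi> x n - x n)^^m) ` Vz scale \<subseteq> lspan scale (delta ` F)"
  proof clarify
    fix x assume x: "x \<in> Vz scale"
    show "((\<lambda>x n. expz scale \<phi> x n - x n)^^m) x \<in> lspan scale (delta ` F)"
      using in_lspan[OF _ F(1)] bar_pow[OF x fp, of m] F(2) by blast
  qed
  moreover have "delta ` F \<subseteq> Vz scale" using delta_Vz by auto
  ultimately show ?thesis unfolding Vz_finite_potent_def using F by blast
qed

lemma neg_fp:
  assumes fp: "finite_potent scale \<phi>"
  shows "finite_potent scale (\<lambda>v. - \<phi> v)"
proof -
  obtain m F where F: "finite F" "range (\<phi>^^m) \<subseteq> span F"
    using fp unfolding finite_potent_def fin_dim_def by blast
  have "range ((\<lambda>v. - \<phi> v)^^m) \<subseteq> span F"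
  proof clarify
    fix v
    have "(\<phi>^^m) v \<in> span F" using F by auto
    then show "((\<lambda>v. - \<phi> v)^^m) v \<in> span F" unfolding neg_pow by (rule span_scale)
  qed
  then show ?thesis unfolding finite_potent_def fin_dim_def using F by blast
qed

end

theorem proposition4p1:
  fixes scale :: "'k::field_char_0 \<Rightarrow> 'v::ab_group_add \<Rightarrow> 'v"
    and \<phi> :: "'v \<Rightarrow> 'v"
  assumes "vector_space scale"
    and "Vector_Spaces.linear scale scale \<phi>"
    and "finite_potent scale \<phi>"
  shows "(\<forall>x\<in>Vz scale. expz scale \<phi> x \<in> Vz scale)
    \<and> (\<forall>x\<in>Vz scale. \<forall>y\<in>Vz scale.
          expz scale \<phi> (\<lambda>n. x n + y n) = (\<lambda>n. expz scale \<phi> x n + expz scale \<phi> y n))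
    \<and> (\<forall>f. \<forall>x\<in>Vz scale. expz scale \<phi> (lsmult scale f x) = lsmult scale f (expz scale \<phi> x))
    \<and> bij_betw (expz scale \<phi>) (Vz scale) (Vz scale)
    \<and> Vz_finite_potent scale (\<lambda>x n. expz scale \<phi> x n - x n)"
proof -
  interpret P: expz_ctx scale \<phi>
    unfolding expz_ctx_def expz_ctx_axioms_def using assms by blast
  interpret Q: expz_ctx scale "\<lambda>v. - \<phi> v"
    unfolding expz_ctx_def expz_ctx_axioms_def using assms P.neg_lin by blast
  have fpQ: "finite_potent scale (\<lambda>v. - \<phi> v)" using P.neg_fp assms(3) .
  have bij: "bij_betw (expz scale \<phi>) (Vz scale) (Vz scale)"
  proof (rule bij_betw_byWitness[where f' = "expz scale (\<lambda>v. - \<phi> v)"])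
    show "\<forall>a\<in>Vz scale. expz scale (\<lambda>v. - \<phi> v) (expz scale \<phi> a) = a"
    proof
      fix a assume "a \<in> Vz scale"
      then obtain N where "\<forall>m<N. a m = 0" by (rule P.VzE)
      then show "expz scale (\<lambda>v. - \<phi> v) (expz scale \<phi> a) = a" by (rule P.expz_neg_comp)
    qed
    show "\<forall>a\<in>Vz scale. expz scale \<phi> (expz scale (\<lambda>v. - \<phi> v) a) = a"
    proof
      fix a assume "a \<in> Vz scale"
      then obtain N where "\<forall>m<N. a m = 0" by (rule P.VzE)
      then have "expz scale (\<lambda>v. - (- \<phi> v)) (expz scale (\<lambda>v. - \<phi> v) a) = a" by (rule Q.expz_neg_comp)
      moreover have "(\<lambda>v. - (- \<phi> v)) = \<phi>" by simp
      ultimately show "expz scale \<phi> (expz scale (\<lambda>v. - \<phi> v) a) = a" by simp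
    qed
    show "expz scale \<phi> ` Vz scale \<subseteq> Vz scale" using P.expz_Vz[OF assms(3)] by blast
    show "expz scale (\<lambda>v. - \<phi> v) ` Vz scale \<subseteq> Vz scale" using Q.expz_Vz[OF fpQ] by blast
  qed
  show ?thesis
  proof (intro conjI ballI allI)
    show "expz scale \<phi> x \<in> Vz scale" if "x \<in> Vz scale" for x using P.expz_Vz[OF assms(3) that] .
    show "expz scale \<phi> (\<lambda>n. x n + y n) = (\<lambda>n. expz scale \<phi> x n + expz scale \<phi> y n)"
      if "x \<in> Vz scale" "y \<in> Vz scale" for x y using P.expz_add[OF that] .
    show "expz scale \<phi> (lsmult scale f x) = lsmult scale f (expz scale \<phi> x)"
      if "x \<in> Vz scale" for f x using P.expz_lsmult[OF that] .
    show "bij_betw (expz scale \<phi>) (Vz scale) (Vz scale)" by (rule bij)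
    show "Vz_finite_potent scale (\<lambda>x n. expz scale \<phi> x n - x n)" by (rule P.bar_fp[OF assms(3)])
  qed
qed

end
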